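(* Let $\vec\nu=(\nu_2,\dots,\nu_{N-1})$ and $\vec\xi=(\xi_2,\dots,\xi_{N-1})$ be irreducible sequences of ordinals $<\varepsilon_{\mathbb{K}+2}$. If $\vec\nu<_{lx}\vec\xi$, then $o(\vec\nu)<o(\vec\xi)$.
   Context: Fix an integer $N\ge3$ and let $\mathbb{K}$ be an infinite cardinal (in the paper, the least $\Pi^1_{N-2}$-indescribable cardinal). $\Lambda=\varepsilon_{\mathbb{K}+1}$, and $\varepsilon_{\mathbb{K}+2}$ is the next epsilon number. Every $0<\xi<\varepsilon_{\mathbb{K}+2}$ has a unique Cantor normal form $\xi=\Lambda^{\xi_m}a_m+\cdots+\Lambda^{\xi_0}a_0$ with $\xi_m>\cdots>\xi_0$ and $0<a_i<\Lambda$. For $\xi>1$: $he(\xi)=\xi_m$, $Tl(\xi)=\Lambda^{\xi_0}a_0$; $he(i)=Tl(i)=i$ for $i\in\{0,1\}$. $he^{(0)}(\xi)=\xi$, $he^{(j+1)}(\xi)=he(he^{(j)}(\xi))$. $\Lambda_0(\xi)=\xi$, $\Lambda_{j+1}(\xi)=\Lambda^{\Lambda_j(\xi)}$. $\vec\xi=(\xi_2,\dots,\xi_{N-1})$ is irreducible iff for all $2\le i<N-1$ and $j>0$ with $i+j\le N-1$: $\xi_i>0$ implies $Tl(\xi_i)\ge\Lambda_j(\xi_{i+j}+1)$. For irreducible $\vec\xi$, $o(\vec\xi)=\sum\{\Lambda_{i-1}(\xi_i+1):2\le i\le N-1,\ \xi_i\ne0\}$, the summands taken in order of increasing $i$ (left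 to right); $o(\vec 0)=0$. $<_{lx}$: for $\vec\nu\ne\vec\xi$ (both indexed $2,\dots,N-1$), let $i$ be least with $\nu_i\ne\xi_i$, suppose $(\xi_i,\dots,\xi_{N-1})$ is not all zero, and let $k_1\ge i$ be least with $\xi_{k_1}\ne0$. Then $\vec\nu<_{lx}\vec\xi$ iff either $(\nu_i,\dots,\nu_{N-1})$ is all zero, or, letting $k_0\ge i$ be least with $\nu_{k_0}\ne0$, one of: (a) $i=k_0<k_1$ and $he^{(k_1-i)}(\nu_i)\le\xi_{k_1}$; (b) $k_0\ge k_1=i$ and $\nu_{k_0}<he^{(k_0-i)}(\xi_i)$. (If $(\xi_i,\dots,\xi_{N-1})$ is all zero, $\vec\nu<_{lx}\vec\xi$ fails.) *)

theory Defs
  imports Main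
begin

text \<open>The type 'k stands for the set of ordinals below the cardinal K, ordered by
  its well-order; K_card_type says that its order type is an uncountable cardinal.\<close>

definition K_card_type :: "'k::wellorder itself \<Rightarrow> bool" where
  "K_card_type _ \<longleftrightarrow>
     (natLeq, card_of (UNIV :: 'k set)) \<in> ordLess \<and>
     (\<forall>x::'k. (card_of {y. y < x}, card_of (UNIV :: 'k set)) \<in> ordLess)"

definition kzero :: "'k::wellorder" where "kzero = (LEAST x. True)"
definition kone :: "'k::wellorder" where "kone = (LEAST x. kzero < x)"

definition kadd :: "'k::wellorder \<Rightarrow> 'k \<Rightarrow> 'k" where
  "kadd a b = (THE c. \<exists>f. bij_betw f {..<b} {a..<c} \<and> strict_mono_on {..<b} f)"

text \<open>C [(e_m,a_m),...,(e_0,a_0)] denotes base^e_m * a_m + ... + base^e_0 * a_0.\<close>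
datatype 'c cnf = C "('c cnf \<times> 'c) list"

fun cnf_less :: "('c \<Rightarrow> 'c \<Rightarrow> bool) \<Rightarrow> 'c cnf \<Rightarrow> 'c cnf \<Rightarrow> bool" where
  "cnf_less lc (C []) (C []) = False"
| "cnf_less lc (C []) (C (_ # _)) = True"
| "cnf_less lc (C (_ # _)) (C []) = False"
| "cnf_less lc (C ((e,a) # xs)) (C ((f,b) # ys)) =
     (cnf_less lc e f \<or> (e = f \<and> (lc a b \<or> (a = b \<and> cnf_less lc (C xs) (C ys)))))"

fun cnf_wf :: "('c \<Rightarrow> bool) \<Rightarrow> ('c \<Rightarrow> 'c \<Rightarrow> bool) \<Rightarrow> 'c cnf \<Rightarrow> bool" where
  "cnf_wf vc lc (C xs) =
     ((\<forall>p \<in> set xs. cnf_wf vc lc (fst p) \<and> vc (snd p)) \<and>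
      sorted_wrt (\<lambda>p q. cnf_less lc (fst q) (fst p)) xs)"

definition cnf_add :: "('c \<Rightarrow> 'c \<Rightarrow> 'c) \<Rightarrow> ('c \<Rightarrow> 'c \<Rightarrow> bool) \<Rightarrow> 'c cnf \<Rightarrow> 'c cnf \<Rightarrow> 'c cnf" where
  "cnf_add ac lc x y = (case (x, y) of (C xs, C ys) \<Rightarrow>
     (case ys of [] \<Rightarrow> C xs
      | (f, b) # ys' \<Rightarrow>
          (let hi = takeWhile (\<lambda>p. cnf_less lc f (fst p)) xs;
               rest = dropWhile (\<lambda>p. cnf_less lc f (fst p)) xs
           in if rest \<noteq> [] \<and> fst (hd rest) = f
              then C (hi @ (f, ac (snd (hd rest)) b) # ys')
              else C (hi @ (f, b) # ys'))))"

section \<open>Level 1: ordinals below Lambda = epsilon_(K+1), in base-K Cantor normal form\<close>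

type_synonym 'k ord1 = "'k cnf"

definition less1 :: "'k::wellorder ord1 \<Rightarrow> 'k ord1 \<Rightarrow> bool" where
  "less1 = cnf_less (<)"
definition wf1 :: "'k::wellorder ord1 \<Rightarrow> bool" where
  "wf1 = cnf_wf (\<lambda>c. c \<noteq> kzero) (<)"
definition add1 :: "'k::wellorder ord1 \<Rightarrow> 'k ord1 \<Rightarrow> 'k ord1" where
  "add1 = cnf_add kadd (<)"
definition zero1 :: "'k::wellorder ord1" where "zero1 = C []"
definition one1 :: "'k::wellorder ord1" where "one1 = C [(C [], kone)]"

section \<open>Level 2: ordinals below epsilon_(K+2), in base-Lambda Cantor normal form\<close>

type_synonym 'k ord2 = "'k cnf cnf"

definition less2 :: "'k::wellorder ord2 \<Rightarrow> 'k ord2 \<Rightarrow> bool" where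
  "less2 = cnf_less less1"
definition le2 :: "'k::wellorder ord2 \<Rightarrow> 'k ord2 \<Rightarrow> bool" where
  "le2 x y \<longleftrightarrow> x = y \<or> less2 x y"
definition wf2 :: "'k::wellorder ord2 \<Rightarrow> bool" where
  "wf2 = cnf_wf (\<lambda>a. wf1 a \<and> a \<noteq> zero1) less1"
definition add2 :: "'k::wellorder ord2 \<Rightarrow> 'k ord2 \<Rightarrow> 'k ord2" where
  "add2 = cnf_add add1 less1"
definition zero2 :: "'k::wellorder ord2" where "zero2 = C []"
definition one2 :: "'k::wellorder ord2" where "one2 = C [(C [], one1)]"
definition succ2 :: "'k::wellorder ord2 \<Rightarrow> 'k ord2" where "succ2 x = add2 x one2"

definition powL :: "'k::wellorder ord2 \<Rightarrow> 'k ord2" where "powL x = C [(x, one1)]"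

definition LamT :: "nat \<Rightarrow> 'k::wellorder ord2 \<Rightarrow> 'k ord2" where
  "LamT j x = (powL ^^ j) x"

definition he :: "'k::wellorder ord2 \<Rightarrow> 'k ord2" where
  "he x = (if x = zero2 \<or> x = one2 then x else (case x of C xs \<Rightarrow> fst (hd xs)))"

definition Tl :: "'k::wellorder ord2 \<Rightarrow> 'k ord2" where
  "Tl x = (if x = zero2 \<or> x = one2 then x else (case x of C xs \<Rightarrow> C [last xs]))"

section \<open>Sequences (xi_2, ..., xi_(N-1)), represented as functions on indices 2..N-1\<close>

definition irreducible :: "nat \<Rightarrow> (nat \<Rightarrow> 'k::wellorder ord2) \<Rightarrow> bool" where
  "irreducible N \<xi> \<longleftrightarrow>
     (\<forall>i j. 2 \<le> i \<and> i < N - 1 \<and> 0 < j \<and> i + j \<le> N - 1 \<longrightarrow>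
        \<xi> i \<noteq> zero2 \<longrightarrow> le2 (LamT j (succ2 (\<xi> (i + j)))) (Tl (\<xi> i)))"

definition ord_o :: "nat \<Rightarrow> (nat \<Rightarrow> 'k::wellorder ord2) \<Rightarrow> 'k ord2" where
  "ord_o N \<xi> = foldl (\<lambda>s i. if \<xi> i = zero2 then s else add2 s (LamT (i - 1) (succ2 (\<xi> i))))
                 zero2 [2..<N]"

definition lx_less :: "nat \<Rightarrow> (nat \<Rightarrow> 'k::wellorder ord2) \<Rightarrow> (nat \<Rightarrow> 'k ord2) \<Rightarrow> bool" where
  "lx_less N \<nu> \<xi> \<longleftrightarrow>
     (\<exists>i \<in> {2..<N}. \<nu> i \<noteq> \<xi> i) \<and>
     (let i = (LEAST i. 2 \<le> i \<and> i < N \<and> \<nu> i \<noteq> \<xi> i) in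
       (\<exists>k \<in> {i..<N}. \<xi> k \<noteq> zero2) \<and>
       (let k1 = (LEAST k. i \<le> k \<and> k < N \<and> \<xi> k \<noteq> zero2) in
         (\<forall>k \<in> {i..<N}. \<nu> k = zero2) \<or>
         (let k0 = (LEAST k. i \<le> k \<and> k < N \<and> \<nu> k \<noteq> zero2) in
           (i = k0 \<and> k0 < k1 \<and> le2 ((he ^^ (k1 - i)) (\<nu> i)) (\<xi> k1)) \<or>
           (k1 \<le> k0 \<and> k1 = i \<and> less2 (\<nu> k0) ((he ^^ (k0 - i)) (\<xi> i))))))"

end

theory Submission
  imports Defs
begin

lemma k_nomax:
  assumes "K_card_type TYPE('k::wellorder)"
  shows "\<exists>y. (x::'k) < y"
proof (rule ccontr)
  assume "\<not> ?thesis"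
  hence m: "\<forall>y. y \<le> x" by (auto simp: not_less)
  have U: "(UNIV::'k set) = {y. y < x} \<union> {x}" using m by (auto simp: order.order_iff_strict)
  have inf: "(natLeq, card_of (UNIV::'k set)) \<in> ordLess" and l1: "(card_of {y. y < x}, card_of (UNIV::'k set)) \<in> ordLess"
    using assms by (auto simp: K_card_type_def)
  have "finite {x}" by simp
  hence "(card_of {x}, natLeq) \<in> ordLess" using finite_iff_ordLess_natLeq by blast
  hence l2: "(card_of {x}, card_of (UNIV::'k set)) \<in> ordLess" using inf ordLess_transitive by blast
  have "\<not> finite (UNIV::'k set)" using inf infinite_iff_natLeq_ordLeq ordLess_imp_ordLeq by blast
  hence "(card_of ({y. y < x} \<union> {x}), card_of (UNIV::'k set)) \<in> ordLess" using card_of_Un_ordLess_infinite l1 l2 by blast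
  hence "(card_of (UNIV::'k set), card_of (UNIV::'k set)) \<in> ordLess" using U by simp
  thus False using ordLess_irreflexive by blast
qed

definition ksucc :: "'k::wellorder \<Rightarrow> 'k" where "ksucc x = (LEAST y. x < y)"

lemma ksucc_gt: "K_card_type TYPE('k::wellorder) \<Longrightarrow> (x::'k) < ksucc x"
  unfolding ksucc_def using k_nomax by (metis LeastI)

lemma ksucc_le: "(x::'k::wellorder) < y \<Longrightarrow> ksucc x \<le> y"
  unfolding ksucc_def by (rule Least_le)

lemma kzero_le: "kzero \<le> (x::'k::wellorder)"
  unfolding kzero_def by (rule Least_le) simp

lemma kone_eq: "(kone::'k::wellorder) = ksucc kzero"
  unfolding kone_def ksucc_def ..

lemma kone_le: "(x::'k::wellorder) \<noteq> kzero \<Longrightarrow> kone \<le> x"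
  unfolding kone_eq using kzero_le ksucc_le by (metis order.not_eq_order_implies_strict)

lemma lt_kone: assumes "K_card_type TYPE('k::wellorder)" shows "{..<(kone::'k)} = {kzero}"
proof -
  have "kzero < (kone::'k)" unfolding kone_eq by (rule ksucc_gt[OF assms])
  thus ?thesis by (auto simp: not_le[symmetric]) (metis kone_le)
qed

lemma kadd_kone: assumes "K_card_type TYPE('k::wellorder)"
  shows "kadd (x::'k) kone = ksucc x"
  unfolding kadd_def lt_kone[OF assms]
proof (rule the_equality)
  have "{x..<ksucc x} = {x}" using ksucc_gt[OF assms, of x] ksucc_le[of x]
    by (auto simp: not_le[symmetric]) (meson leD order_le_less)
  thus "\<exists>f. bij_betw f {kzero} {x..<ksucc x} \<and> strict_mono_on {kzero} f"
    by (intro exI[of _ "\<lambda>_. x"]) (auto simp: bij_betw_def strict_mono_on_def)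
next
  fix c assume "\<exists>f. bij_betw f {kzero::'k} {x..<c} \<and> strict_mono_on {kzero} f"
  then obtain f :: "'k \<Rightarrow> 'k" where "bij_betw f {kzero::'k} {x..<c}" by blast
  hence S: "{x..<c} = {f kzero}" by (auto simp: bij_betw_def)
  hence xc: "x < c" by (metis atLeastLessThan_empty_iff insert_not_empty not_le)
  have "x \<in> {x..<c}" using xc by simp
  hence fx: "f kzero = x" using S by simp
  show "c = ksucc x"
  proof (rule antisym)
    show "ksucc x \<le> c" using xc ksucc_le by blast
    show "c \<le> ksucc x"
    proof (rule ccontr)
      assume "\<not> c \<le> ksucc x"
      hence "ksucc x \<in> {x..<c}" using ksucc_gt[OF assms, of x] by auto
      thus False using S fx ksucc_gt[OF assms, of x] by auto
    qed
  qed
qed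


section \<open>Generic CNF facts\<close>

lemma cnf_less_Nil_right[simp]: "\<not> cnf_less lc x (C [])"
proof (cases x)
  case (C xs) then show ?thesis by (cases xs) auto
qed

lemma cnf_less_Nil_left: "cnf_less lc (C []) y \<longleftrightarrow> y \<noteq> C []"
proof (cases y)
  case (C xs) then show ?thesis by (cases xs) auto
qed

lemma cnf_less_irrefl0:
  "(\<forall>a. \<not> lc a a) \<Longrightarrow> x = y \<Longrightarrow> \<not> cnf_less lc x y"
  by (induction lc x y rule: cnf_less.induct) auto

lemma cnf_less_irrefl:
  assumes "\<And>a. \<not> lc a a" shows "x = y \<Longrightarrow> \<not> cnf_less lc x y"
  using cnf_less_irrefl0 assms by blast

lemma cnf_less_trans0:
  shows "(\<forall>a b c. lc a b \<longrightarrow> lc b c \<longrightarrow> lc a c) \<Longrightarrow> cnf_less lc x y \<Longrightarrow> cnf_less lc y z \<Longrightarrow> cnf_less lc x z"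
proof (induction lc x y arbitrary: z rule: cnf_less.induct)
  case 2
  then show ?case by (auto simp: cnf_less_Nil_left)
next
  case (4 lc e a xs f b ys)
  obtain zs where z: "z = C zs" by (cases z) auto
  show ?case
  proof (cases zs)
    case Nil then show ?thesis using 4 z by simp
  next
    case (Cons p zs')
    obtain g c where p: "p = (g, c)" by (cases p)
    show ?thesis using 4 z Cons p by auto
  qed
qed auto

lemma cnf_less_trans:
  assumes tr: "\<And>a b c. lc a b \<Longrightarrow> lc b c \<Longrightarrow> lc a c"
  shows "cnf_less lc x y \<Longrightarrow> cnf_less lc y z \<Longrightarrow> cnf_less lc x z"
  using cnf_less_trans0[of lc x y z] tr by blast

lemma cnf_less_prefix:
  assumes irr: "\<And>a. \<not> lc a a"
  shows "cnf_less lc (C (p @ xs)) (C (p @ ys)) = cnf_less lc (C xs) (C ys)"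
proof (induction p)
  case (Cons q p)
  obtain e a where "q = (e, a)" by (cases q)
  then show ?case using Cons cnf_less_irrefl[of lc, OF irr] irr by auto
qed simp

fun gs :: "('c \<Rightarrow> 'c \<Rightarrow> 'c) \<Rightarrow> 'c \<Rightarrow> ('c cnf \<times> 'c) list \<Rightarrow> ('c cnf \<times> 'c) list" where
  "gs ac one [] = [(C [], one)]"
| "gs ac one ((e, a) # xs) = (if e = C [] then [(C [], ac a one)] else (e, a) # gs ac one xs)"

lemma cnf_add_gs: "cnf_add ac lc (C xs) (C [(C [], one)]) = C (gs ac one xs)"
proof -
  have tw: "(\<lambda>p. cnf_less lc (C []) (fst p)) = (\<lambda>p. fst p \<noteq> C [])"
    by (rule ext) (simp add: cnf_less_Nil_left)
  have "(let hi = takeWhile (\<lambda>p. fst p \<noteq> C []) xs; rest = dropWhile (\<lambda>p. fst p \<noteq> C []) xs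
           in if rest \<noteq> [] \<and> fst (hd rest) = C [] then C (hi @ [(C [], ac (snd (hd rest)) one)])
              else C (hi @ [(C [], one)])) = C (gs ac one xs)"
  proof (induction xs)
    case (Cons p xs)
    obtain e a where "p = (e, a)" by (cases p)
    then show ?case using Cons by (auto simp: Let_def split: if_splits)
  qed simp
  then show ?thesis unfolding cnf_add_def by (simp add: cnf_less_Nil_left)
qed

lemma gs_gt:
  assumes "\<And>a. lc a (ac a one)" and irr: "\<And>a. \<not> lc a a"
  shows "cnf_less lc (C xs) (C (gs ac one xs))"
proof (induction xs)
  case (Cons p xs)
  obtain e a where "p = (e, a)" by (cases p)
  then show ?case using Cons assms cnf_less_irrefl[of lc, OF irr] by auto
qed simp

fun nz_init :: "('c cnf \<times> 'c) list \<Rightarrow> bool" where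
  "nz_init [] = True"
| "nz_init (p # xs) = ((fst p = C [] \<longrightarrow> xs = []) \<and> nz_init xs)"

lemma sorted_nz_init: "sorted_wrt (\<lambda>p q. cnf_less lc (fst q) (fst p)) xs \<Longrightarrow> nz_init xs"
proof (induction xs)
  case (Cons p xs)
  then show ?case by (cases xs) auto
qed simp

lemma gs_le:
  assumes irr: "\<And>a. \<not> lc a a"
    and one: "\<And>b. vc b \<Longrightarrow> b = one \<or> lc one b"
    and sc: "\<And>a b. vc a \<Longrightarrow> vc b \<Longrightarrow> lc a b \<Longrightarrow> ac a one = b \<or> lc (ac a one) b"
  shows "nz_init xs \<Longrightarrow> nz_init ys \<Longrightarrow> \<forall>p\<in>set xs. vc (snd p) \<Longrightarrow> \<forall>p\<in>set ys. vc (snd p)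
    \<Longrightarrow> cnf_less lc (C xs) (C ys) \<Longrightarrow> gs ac one xs = ys \<or> cnf_less lc (C (gs ac one xs)) (C ys)"
proof (induction xs arbitrary: ys)
  case Nil
  then obtain f b ys' where ys: "ys = (f, b) # ys'" by (cases ys) (auto simp: cnf_less_Nil_left)
  show ?case
  proof (cases "f = C []")
    case True
    then have "ys' = []" using Nil ys by simp
    then show ?thesis using one[of b] Nil ys True by auto
  next
    case False
    then show ?thesis using ys by (simp add: cnf_less_Nil_left)
  qed
next
  case (Cons p xs)
  obtain e a where p: "p = (e, a)" by (cases p)
  from Cons.prems obtain f b ys' where ys: "ys = (f, b) # ys'" by (cases ys) auto
  have ie: "\<And>x. \<not> cnf_less lc x x" using cnf_less_irrefl[of lc, OF irr] by blast
  show ?case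
  proof (cases "e = C []")
    case True
    then have xs: "xs = []" using Cons.prems p by simp
    show ?thesis
    proof (cases "f = C []")
      case True
      then have ys': "ys' = []" using Cons.prems ys by simp
      have "lc a b" using Cons.prems p ys ys' xs \<open>e = C []\<close> True irr by auto
      then show ?thesis using sc[of a b] Cons.prems p ys ys' xs \<open>e = C []\<close> True ie irr by auto
    next
      case False
      then show ?thesis using p ys True by (simp add: cnf_less_Nil_left)
    qed
  next
    case False
    have "cnf_less lc e f \<or> (e = f \<and> (lc a b \<or> (a = b \<and> cnf_less lc (C xs) (C ys'))))"
      using Cons.prems p ys by simp
    moreover have "cnf_less lc (C xs) (C ys') \<Longrightarrow> gs ac one xs = ys' \<or> cnf_less lc (C (gs ac one xs)) (C ys')"
      using Cons.IH Cons.prems p ys by auto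
    ultimately show ?thesis using False p ys ie by auto
  qed
qed

lemma one_le:
  assumes "vc c" and one: "\<And>b. vc b \<Longrightarrow> b = one \<or> lc one b"
  shows "C [(C [], one)] = C ((e, c) # rest) \<or> cnf_less lc (C [(C [], one)]) (C ((e, c) # rest))"
  using one[OF assms(1)] by (cases rest) (auto simp: cnf_less_Nil_left)


section \<open>Level 1\<close>

lemma less1_irrefl: "\<not> less1 x x"
  unfolding less1_def by (rule cnf_less_irrefl) auto

lemma less1_trans: "less1 x y \<Longrightarrow> less1 y z \<Longrightarrow> less1 x z"
  unfolding less1_def by (rule cnf_less_trans) auto

lemma add1_one: "add1 (C xs) one1 = C (gs kadd kone xs)"
  unfolding add1_def one1_def by (rule cnf_add_gs)

lemma wf1_C: "wf1 (C xs) \<longleftrightarrow> (\<forall>p\<in>set xs. wf1 (fst p) \<and> snd p \<noteq> kzero) \<and>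
   sorted_wrt (\<lambda>p q. less1 (fst q) (fst p)) xs"
  unfolding wf1_def less1_def by simp

context
  fixes dummy :: "'k::wellorder itself"
  assumes K: "K_card_type TYPE('k)"
begin

lemma L1A: "less1 (a::'k ord1) (add1 a one1)"
proof (cases a)
  case (C xs)
  show ?thesis unfolding C add1_one less1_def
    by (rule gs_gt) (auto simp: kadd_kone[OF K] ksucc_gt[OF K])
qed

lemma L1one: "wf1 (b::'k ord1) \<Longrightarrow> b \<noteq> zero1 \<Longrightarrow> b = one1 \<or> less1 one1 b"
proof -
  assume w: "wf1 b" and nz: "b \<noteq> zero1"
  obtain xs where b: "b = C xs" by (cases b)
  then obtain e c rest where xs: "xs = (e, c) # rest" using nz unfolding zero1_def
    by (cases xs) auto
  have "c \<noteq> kzero" using w b xs by (simp add: wf1_C)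
  have "C [(C [], kone)] = C ((e,c)#rest) \<or> cnf_less (<) (C [(C [], kone)]) (C ((e,c)#rest))"
    by (rule one_le[where vc = "\<lambda>c. c \<noteq> kzero"]) (use \<open>c \<noteq> kzero\<close> kone_le in \<open>auto simp: order.order_iff_strict\<close>)
  then show ?thesis unfolding b xs one1_def less1_def by auto
qed

lemma L1B: "wf1 (a::'k ord1) \<Longrightarrow> wf1 b \<Longrightarrow> less1 a b \<Longrightarrow> add1 a one1 = b \<or> less1 (add1 a one1) b"
proof -
  assume wa: "wf1 a" and wb: "wf1 b" and l: "less1 a b"
  obtain xs where a: "a = C xs" by (cases a)
  obtain ys where b: "b = C ys" by (cases b)
  have "gs kadd kone xs = ys \<or> cnf_less (<) (C (gs kadd kone xs)) (C ys)"
  proof (rule gs_le[where vc = "\<lambda>c. c \<noteq> kzero"])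
    show "nz_init xs" using wa a by (auto simp: wf1_C less1_def intro: sorted_nz_init)
    show "nz_init ys" using wb b by (auto simp: wf1_C less1_def intro: sorted_nz_init)
    show "\<forall>p\<in>set xs. snd p \<noteq> kzero" using wa a by (auto simp: wf1_C)
    show "\<forall>p\<in>set ys. snd p \<noteq> kzero" using wb b by (auto simp: wf1_C)
    show "cnf_less (<) (C xs) (C ys)" using l a b by (simp add: less1_def)
    show "\<And>b::'k. b \<noteq> kzero \<Longrightarrow> b = kone \<or> kone < b" using kone_le by (auto simp: order.order_iff_strict)
    show "\<And>a b::'k. a \<noteq> kzero \<Longrightarrow> b \<noteq> kzero \<Longrightarrow> a < b \<Longrightarrow> kadd a kone = b \<or> kadd a kone < b"
      using ksucc_le by (auto simp: kadd_kone[OF K] order.order_iff_strict)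
  qed auto
  then show ?thesis unfolding a b add1_one less1_def by auto
qed

end


section \<open>Level 2\<close>

lemma less2_irrefl: "\<not> less2 x x"
  unfolding less2_def by (rule cnf_less_irrefl) (auto simp: less1_irrefl)

lemma less2_trans: "less2 x y \<Longrightarrow> less2 y z \<Longrightarrow> less2 x z"
  unfolding less2_def by (rule cnf_less_trans) (auto intro: less1_trans)

lemma le_less2_trans: "le2 x y \<Longrightarrow> less2 y z \<Longrightarrow> less2 x z"
  unfolding le2_def using less2_trans by blast

lemma less_le2_trans: "less2 x y \<Longrightarrow> le2 y z \<Longrightarrow> less2 x z"
  unfolding le2_def using less2_trans by blast

lemma succ2_C: "succ2 (C xs) = C (gs add1 one1 xs)"
  unfolding succ2_def add2_def one2_def by (rule cnf_add_gs)

lemma wf2_C: "wf2 (C xs) \<longleftrightarrow> (\<forall>p\<in>set xs. wf2 (fst p) \<and> wf1 (snd p) \<and> snd p \<noteq> zero1) \<and>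
   sorted_wrt (\<lambda>p q. less2 (fst q) (fst p)) xs"
  unfolding wf2_def less2_def by simp

lemma less2_Nil_left: "less2 (C []) y \<longleftrightarrow> y \<noteq> C []"
  unfolding less2_def by (rule cnf_less_Nil_left)

lemma less2_Nil_right[simp]: "\<not> less2 x (C [])"
  unfolding less2_def by simp

lemma powL_mono: "less2 x y \<Longrightarrow> less2 (powL x) (powL y)"
  unfolding powL_def less2_def by simp

lemma LamT_0[simp]: "LamT 0 x = x" unfolding LamT_def by simp
lemma LamT_Suc: "LamT (Suc n) x = powL (LamT n x)" unfolding LamT_def by simp
lemma LamT_add: "LamT m (LamT n x) = LamT (m + n) x" unfolding LamT_def by (simp add: funpow_add)

lemma LamT_mono: "less2 x y \<Longrightarrow> less2 (LamT n x) (LamT n y)"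
  by (induction n) (auto simp: LamT_Suc powL_mono)

lemma LamT_mono_le: "le2 x y \<Longrightarrow> le2 (LamT n x) (LamT n y)"
  unfolding le2_def using LamT_mono by blast

lemma less_powL: "less2 e y \<Longrightarrow> less2 (C ((e, a) # rest)) (powL y)"
  unfolding powL_def less2_def by simp

lemma Nil_less_powL: "less2 (C []) (powL y)"
  unfolding powL_def less2_def by simp

lemma he_C: "C ((e, a) # rest) \<noteq> one2 \<Longrightarrow> he (C ((e, a) # rest)) = e"
  unfolding he_def zero2_def by simp

lemma X_lemma: "less2 (he x) y \<Longrightarrow> less2 x (powL y)"
proof (cases x)
  case (C xs)
  assume l: "less2 (he x) y"
  show ?thesis
  proof (cases xs)
    case Nil then show ?thesis using C Nil_less_powL by simp
  next
    case (Cons p rest)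
    obtain e a where p: "p = (e, a)" by (cases p)
    show ?thesis
    proof (cases "x = one2")
      case True
      then have "e = C []" using C Cons p unfolding one2_def by simp
      moreover have "y \<noteq> C []" using l by auto
      ultimately show ?thesis using C Cons p less_powL less2_Nil_left by metis
    next
      case False
      then show ?thesis using C Cons p l he_C less_powL by metis
    qed
  qed
qed

lemma S_lemma: "less2 (he x) y \<Longrightarrow> less2 (succ2 x) (powL y)"
proof (cases x)
  case (C xs)
  assume l: "less2 (he x) y"
  have y: "y \<noteq> C []" using l by auto
  show ?thesis
  proof (cases xs)
    case Nil then show ?thesis using C y by (simp add: succ2_C less_powL less2_Nil_left)
  next
    case (Cons p rest)
    obtain e a where p: "p = (e, a)" by (cases p)
    show ?thesis
    proof (cases "e = C []")
      case True
      then show ?thesis using C Cons p y by (simp add: succ2_C less_powL less2_Nil_left)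
    next
      case False
      then have "x \<noteq> one2" using C Cons p unfolding one2_def by simp
      then have "he x = e" using C Cons p he_C by simp
      then show ?thesis using C Cons p False l by (simp add: succ2_C less_powL)
    qed
  qed
qed

lemma he_fix: "x = zero2 \<or> x = one2 \<Longrightarrow> (he ^^ n) x = x"
  by (induction n) (auto simp: he_def)

lemma wf2_he: "wf2 x \<Longrightarrow> wf2 (he x)"
proof (cases x)
  case (C xs)
  assume w: "wf2 x"
  show ?thesis
  proof (cases "x = zero2 \<or> x = one2")
    case True then show ?thesis using w by (auto simp: he_def)
  next
    case False
    then obtain p rest where "xs = p # rest" using C unfolding zero2_def by (cases xs) auto
    then show ?thesis using C False w by (auto simp: he_def wf2_C)
  qed
qed

lemma wf2_funpow_he: "wf2 x \<Longrightarrow> wf2 ((he ^^ n) x)"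
  by (induction n) (auto simp: wf2_he)

lemma Tl_le: "wf2 x \<Longrightarrow> le2 (Tl x) x"
proof (cases x)
  case (C xs)
  assume w: "wf2 x"
  show ?thesis
  proof (cases "x = zero2 \<or> x = one2")
    case True then show ?thesis by (auto simp: Tl_def le2_def)
  next
    case False
    then obtain p rest where xs: "xs = p # rest" using C unfolding zero2_def by (cases xs) auto
    show ?thesis
    proof (cases rest)
      case Nil then show ?thesis using C False xs by (simp add: Tl_def le2_def)
    next
      case (Cons q rest')
      have "last xs \<in> set rest" using xs Cons by simp
      then have "less2 (fst (last xs)) (fst p)" using w C xs by (auto simp: wf2_C)
      then have "less2 (C [last xs]) (C xs)" using xs unfolding less2_def
        by (cases "last xs", cases p) auto
      then show ?thesis using C False by (simp add: Tl_def le2_def)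
    qed
  qed
qed

context
  fixes dummy :: "'k::wellorder itself"
  assumes K: "K_card_type TYPE('k)"
begin

lemma L2A: "less2 (x::'k ord2) (succ2 x)"
proof (cases x)
  case (C xs)
  show ?thesis unfolding C succ2_C less2_def
    by (rule gs_gt) (auto simp: L1A[OF K] less1_irrefl)
qed

lemma L2B: "wf2 (a::'k ord2) \<Longrightarrow> wf2 b \<Longrightarrow> less2 a b \<Longrightarrow> le2 (succ2 a) b"
proof -
  assume wa: "wf2 a" and wb: "wf2 b" and l: "less2 a b"
  obtain xs where a: "a = C xs" by (cases a)
  obtain ys where b: "b = C ys" by (cases b)
  have "gs add1 one1 xs = ys \<or> cnf_less less1 (C (gs add1 one1 xs)) (C ys)"
  proof (rule gs_le[where vc = "\<lambda>c. wf1 c \<and> c \<noteq> zero1"])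
    show "nz_init xs" using wa a by (auto simp: wf2_C less2_def intro: sorted_nz_init)
    show "nz_init ys" using wb b by (auto simp: wf2_C less2_def intro: sorted_nz_init)
    show "\<forall>p\<in>set xs. wf1 (snd p) \<and> snd p \<noteq> zero1" using wa a by (auto simp: wf2_C)
    show "\<forall>p\<in>set ys. wf1 (snd p) \<and> snd p \<noteq> zero1" using wb b by (auto simp: wf2_C)
    show "cnf_less less1 (C xs) (C ys)" using l a b by (simp add: less2_def)
    show "\<And>b::'k ord1. wf1 b \<and> b \<noteq> zero1 \<Longrightarrow> b = one1 \<or> less1 one1 b" using L1one[OF K] by blast
    show "\<And>a b::'k ord1. wf1 a \<and> a \<noteq> zero1 \<Longrightarrow> wf1 b \<and> b \<noteq> zero1 \<Longrightarrow> less1 a b \<Longrightarrow>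
       add1 a one1 = b \<or> less1 (add1 a one1) b"
      using L1B[OF K] by blast
  qed (auto simp: less1_irrefl)
  then show ?thesis unfolding a b succ2_C less2_def le2_def by auto
qed

lemma L2one: "wf2 (y::'k ord2) \<Longrightarrow> less2 y one2 \<Longrightarrow> y = zero2"
proof -
  assume w: "wf2 y" and l: "less2 y one2"
  obtain xs where y: "y = C xs" by (cases y)
  show ?thesis
  proof (cases xs)
    case Nil then show ?thesis using y by (simp add: zero2_def)
  next
    case (Cons p rest)
    obtain e a where p: "p = (e, a)" by (cases p)
    have la: "less1 a one1" using l y Cons p unfolding less2_def one2_def by auto
    have "wf1 a" "a \<noteq> zero1" using w y Cons p by (auto simp: wf2_C)
    then have "a = one1 \<or> less1 one1 a" using L1one[OF K] by blast
    then show ?thesis using la less1_irrefl less1_trans by blast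
  qed
qed

lemma H_lemma: "le2 ((he ^^ d) x) \<xi> \<Longrightarrow> less2 (x::'k ord2) (LamT d (succ2 \<xi>))"
proof (induction d arbitrary: x)
  case 0 then show ?case by (simp add: le_less2_trans[OF _ L2A])
next
  case (Suc d)
  have "(he ^^ Suc d) x = (he ^^ d) (he x)" by (simp add: funpow_Suc_right del: funpow.simps)
  then have "less2 (he x) (LamT d (succ2 \<xi>))" using Suc by simp
  then show ?case by (simp add: LamT_Suc X_lemma)
qed

lemma G_lemma: "wf2 (x::'k ord2) \<Longrightarrow> wf2 \<nu> \<Longrightarrow> \<nu> \<noteq> zero2 \<Longrightarrow> less2 \<nu> ((he ^^ d) x)
   \<Longrightarrow> le2 (LamT d (succ2 \<nu>)) x"
proof (induction d arbitrary: x)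
  case 0 then show ?case using L2B by simp
next
  case (Suc d)
  have eq: "(he ^^ Suc d) x = (he ^^ d) (he x)" by (simp add: funpow_Suc_right del: funpow.simps)
  have "less2 \<nu> ((he ^^ d) (he x))" using Suc.prems eq by simp
  then have IH: "le2 (LamT d (succ2 \<nu>)) (he x)" using Suc.IH[of "he x"] Suc.prems wf2_he by blast
  have nx: "x \<noteq> zero2 \<and> x \<noteq> one2"
  proof (rule ccontr)
    assume c: "\<not> (x \<noteq> zero2 \<and> x \<noteq> one2)"
    then have "(he ^^ Suc d) x = x" using he_fix by blast
    then have "less2 \<nu> x" using Suc by simp
    then show False using c Suc.prems L2one by (auto simp: zero2_def)
  qed
  then obtain e a rest where x: "x = C ((e, a) # rest)"
    by (metis cnf.exhaust list.exhaust surj_pair zero2_def)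
  then have hx: "he x = e" using nx he_C by metis
  have a: "wf1 a" "a \<noteq> zero1" using Suc.prems x by (auto simp: wf2_C)
  define y where "y = LamT d (succ2 \<nu>)"
  have ye: "le2 y e" using IH hx y_def by simp
  have "le2 (C [(y, one1)]) (C ((e, a) # rest))"
  proof (cases "y = e")
    case True
    have "a = one1 \<or> less1 one1 a" using L1one[OF K] a by blast
    then show ?thesis using True unfolding le2_def less2_def
      by (cases rest) (auto simp: less1_irrefl cnf_less_Nil_left)
  next
    case False
    then have "less2 y e" using ye le2_def by blast
    then show ?thesis unfolding le2_def less2_def by simp
  qed
  then show ?case using x by (simp add: LamT_Suc powL_def y_def)
qed

end


definition EE :: "(nat \<Rightarrow> 'k::wellorder ord2) \<Rightarrow> nat \<Rightarrow> 'k ord2" where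
  "EE \<xi> i = LamT (i - 2) (succ2 (\<xi> i))"

definition MM :: "(nat \<Rightarrow> 'k::wellorder ord2) \<Rightarrow> nat list \<Rightarrow> ('k ord1 cnf \<times> 'k ord1) list" where
  "MM \<xi> l = map (\<lambda>i. (EE \<xi> i, one1)) (filter (\<lambda>i. \<xi> i \<noteq> zero2) l)"

lemma upt_split: "i \<le> j \<Longrightarrow> j \<le> k \<Longrightarrow> [i..<k] = [i..<j] @ [j..<k]"
  using upt_add_eq_append[of i j "k - j"] by simp

lemma add2_append: "(\<forall>p\<in>set L. less2 e (fst p)) \<Longrightarrow> add2 (C L) (C [(e, a)]) = C (L @ [(e, a)])"
proof -
  assume h: "\<forall>p\<in>set L. less2 e (fst p)"
  have t: "takeWhile (\<lambda>p. cnf_less less1 e (fst p)) L = L"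
    using h by (simp add: takeWhile_eq_all_conv less2_def)
  have d: "dropWhile (\<lambda>p. cnf_less less1 e (fst p)) L = []"
    using h by (simp add: dropWhile_eq_Nil_conv less2_def)
  show ?thesis unfolding add2_def cnf_add_def using h by (simp add: t d less2_def)
qed

lemma filter_least:
  assumes "\<exists>k. i \<le> k \<and> k < N \<and> P k"
  shows "filter P [i..<N] = (LEAST k. i \<le> k \<and> k < N \<and> P k) # filter P [Suc (LEAST k. i \<le> k \<and> k < N \<and> P k)..<N]"
proof -
  define k where "k = (LEAST k. i \<le> k \<and> k < N \<and> P k)"
  have k: "i \<le> k \<and> k < N \<and> P k" using LeastI_ex[OF assms] k_def by simp
  have nk: "\<And>j. i \<le> j \<Longrightarrow> j < k \<Longrightarrow> \<not> P j"
    using not_less_Least k k_def by fastforce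
  have "[i..<N] = [i..<k] @ [k..<N]" using k upt_split by simp
  also have "[k..<N] = k # [Suc k..<N]" using k upt_conv_Cons by simp
  finally have "filter P [i..<N] = filter P [i..<k] @ filter P (k # [Suc k..<N])" by simp
  moreover have "filter P [i..<k] = []" using nk by (auto simp: filter_empty_conv)
  ultimately show ?thesis using k k_def by simp
qed

context
  fixes dummy :: "'k::wellorder itself"
  assumes K: "K_card_type TYPE('k)"
begin

lemma decr:
  assumes irr: "irreducible N (\<xi> :: nat \<Rightarrow> 'k ord2)" and w: "\<forall>i\<in>{2..<N}. wf2 (\<xi> i)"
    and "2 \<le> i" "i < i'" "i' < N" "\<xi> i \<noteq> zero2"
  shows "less2 (EE \<xi> i') (EE \<xi> i)"
proof -
  have "le2 (LamT (i' - i) (succ2 (\<xi> (i + (i' - i))))) (Tl (\<xi> i))"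
  proof -
    have "2 \<le> i \<and> i < N - 1 \<and> 0 < i' - i \<and> i + (i' - i) \<le> N - 1" using assms(3-5) by auto
    then show ?thesis using irr assms(6) unfolding irreducible_def by blast
  qed
  then have "le2 (LamT (i' - i) (succ2 (\<xi> i'))) (Tl (\<xi> i))" using assms by simp
  moreover have "le2 (Tl (\<xi> i)) (\<xi> i)"
  proof -
    have "i \<in> {2..<N}" using assms by simp
    then show ?thesis using w Tl_le by blast
  qed
  moreover have "less2 (\<xi> i) (succ2 (\<xi> i))" by (rule L2A[OF K])
  ultimately have "less2 (LamT (i' - i) (succ2 (\<xi> i'))) (succ2 (\<xi> i))"
    using le_less2_trans by blast
  then have "less2 (LamT (i - 2) (LamT (i' - i) (succ2 (\<xi> i')))) (LamT (i - 2) (succ2 (\<xi> i)))"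
    by (rule LamT_mono)
  moreover have "i - 2 + (i' - i) = i' - 2" using assms by simp
  ultimately show ?thesis unfolding EE_def LamT_add by simp
qed

lemma fold_o:
  assumes irr: "irreducible N (\<xi> :: nat \<Rightarrow> 'k ord2)" and w: "\<forall>i\<in>{2..<N}. wf2 (\<xi> i)"
  shows "n \<le> N \<Longrightarrow> foldl (\<lambda>s i. if \<xi> i = zero2 then s else add2 s (LamT (i - 1) (succ2 (\<xi> i))))
                 zero2 [2..<n] = C (MM \<xi> [2..<n])"
proof (induction n)
  case 0 then show ?case by (simp add: zero2_def MM_def)
next
  case (Suc n)
  show ?case
  proof (cases "n < 2")
    case True
    then have "[2..<Suc n] = []" by simp
    then show ?thesis by (simp add: zero2_def MM_def)
  next
    case False
    then have u: "[2..<Suc n] = [2..<n] @ [n]" by simp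
    have IH: "foldl (\<lambda>s i. if \<xi> i = zero2 then s else add2 s (LamT (i - 1) (succ2 (\<xi> i))))
                 zero2 [2..<n] = C (MM \<xi> [2..<n])" using Suc by simp
    show ?thesis
    proof (cases "\<xi> n = zero2")
      case True then show ?thesis using u IH by (simp add: MM_def)
    next
      case nz: False
      have L: "LamT (n - 1) (succ2 (\<xi> n)) = C [(EE \<xi> n, one1)]"
      proof -
        have "n - 1 = Suc (n - 2)" using False by simp
        then show ?thesis by (simp add: EE_def powL_def LamT_Suc)
      qed
      have "\<forall>p\<in>set (MM \<xi> [2..<n]). less2 (EE \<xi> n) (fst p)"
        using decr[OF irr w] Suc.prems by (auto simp: MM_def)
      then show ?thesis using u IH nz L by (simp add: MM_def add2_append)
    qed
  qed
qed

end


lemma ord_o_eq: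
  assumes K: "K_card_type TYPE('k::wellorder)"
    and irr: "irreducible N (\<xi> :: nat \<Rightarrow> 'k ord2)" and w: "\<forall>i\<in>{2..<N}. wf2 (\<xi> i)"
  shows "ord_o N \<xi> = C (MM \<xi> [2..<N])"
  unfolding ord_o_def using fold_o[OF K irr w] by simp

theorem proposition2p15:
  fixes N :: nat and \<nu> \<xi> :: "nat \<Rightarrow> 'k::wellorder ord2"
  assumes "N \<ge> 3"
    and "K_card_type TYPE('k)"
    and "\<forall>i \<in> {2..<N}. wf2 (\<nu> i)"
    and "\<forall>i \<in> {2..<N}. wf2 (\<xi> i)"
    and "irreducible N \<nu>"
    and "irreducible N \<xi>"
    and "lx_less N \<nu> \<xi>"
  shows "less2 (ord_o N \<nu>) (ord_o N \<xi>)"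
proof -
  note K = assms(2)
  define i where "i = (LEAST i. 2 \<le> i \<and> i < N \<and> \<nu> i \<noteq> \<xi> i)"
  have "\<exists>i\<in>{2..<N}. \<nu> i \<noteq> \<xi> i" using assms(7) unfolding lx_less_def by (rule conjunct1)
  then have ex: "\<exists>i. 2 \<le> i \<and> i < N \<and> \<nu> i \<noteq> \<xi> i" by auto
  have i: "2 \<le> i" "i < N" "\<nu> i \<noteq> \<xi> i" using LeastI_ex[OF ex] i_def by auto
  have below: "\<And>j. 2 \<le> j \<Longrightarrow> j < i \<Longrightarrow> \<nu> j = \<xi> j"
    using not_less_Least i_def i by fastforce
  define k1 where "k1 = (LEAST k. i \<le> k \<and> k < N \<and> \<xi> k \<noteq> zero2)"
  define k0 where "k0 = (LEAST k. i \<le> k \<and> k < N \<and> \<nu> k \<noteq> zero2)"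
  have lx: "(\<exists>k \<in> {i..<N}. \<xi> k \<noteq> zero2) \<and>
         ((\<forall>k \<in> {i..<N}. \<nu> k = zero2) \<or>
           (i = k0 \<and> k0 < k1 \<and> le2 ((he ^^ (k1 - i)) (\<nu> i)) (\<xi> k1)) \<or>
           (k1 \<le> k0 \<and> k1 = i \<and> less2 (\<nu> k0) ((he ^^ (k0 - i)) (\<xi> i))))"
  proof -
    have "lx_less N \<nu> \<xi>" by (rule assms(7))
    then have "(\<exists>k \<in> {i..<N}. \<xi> k \<noteq> zero2) \<and>
         ((\<forall>k \<in> {i..<N}. \<nu> k = zero2) \<or>
           (i = k0 \<and> k0 < k1 \<and> le2 ((he ^^ (k1 - i)) (\<nu> i)) (\<xi> k1)) \<or>
           (k1 \<le> k0 \<and> k1 = i \<and> less2 (\<nu> k0) ((he ^^ (k0 - i)) (\<xi> i))))"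
      unfolding lx_less_def Let_def i_def[symmetric] k1_def[symmetric] k0_def[symmetric] by (rule conjunct2)
    then show ?thesis .
  qed
  have ex1: "\<exists>k. i \<le> k \<and> k < N \<and> \<xi> k \<noteq> zero2" using lx by auto
  have k1: "i \<le> k1" "k1 < N" "\<xi> k1 \<noteq> zero2" using LeastI_ex[OF ex1] k1_def by auto
  have split: "[2..<N] = [2..<i] @ [i..<N]" using i by (intro upt_split) auto
  have pre: "MM \<nu> [2..<i] = MM \<xi> [2..<i]"
  proof -
    have "filter (\<lambda>j. \<nu> j \<noteq> zero2) [2..<i] = filter (\<lambda>j. \<xi> j \<noteq> zero2) [2..<i]"
      by (rule filter_cong) (auto simp: below)
    moreover have "map (\<lambda>j. (EE \<nu> j, one1)) (filter (\<lambda>j. \<xi> j \<noteq> zero2) [2..<i])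
       = map (\<lambda>j. (EE \<xi> j, one1)) (filter (\<lambda>j. \<xi> j \<noteq> zero2) [2..<i])"
      by (rule map_cong) (auto simp: EE_def below)
    ultimately show ?thesis unfolding MM_def by simp
  qed
  have B: "MM \<xi> [i..<N] = (EE \<xi> k1, one1) # MM \<xi> [Suc k1..<N]"
    using filter_least[OF ex1] k1_def by (simp add: MM_def)
  have main: "less2 (C (MM \<nu> [i..<N])) (C (MM \<xi> [i..<N]))"
  proof (cases "\<forall>k \<in> {i..<N}. \<nu> k = zero2")
    case True
    then have "MM \<nu> [i..<N] = []" by (auto simp: MM_def filter_empty_conv)
    then show ?thesis using B by (simp add: less2_Nil_left)
  next
    case nz: False
    then have ex0: "\<exists>k. i \<le> k \<and> k < N \<and> \<nu> k \<noteq> zero2" by auto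
    have k0: "i \<le> k0" "k0 < N" "\<nu> k0 \<noteq> zero2" using LeastI_ex[OF ex0] k0_def by auto
    have A: "MM \<nu> [i..<N] = (EE \<nu> k0, one1) # MM \<nu> [Suc k0..<N]"
      using filter_least[OF ex0] k0_def by (simp add: MM_def)
    have "less2 (EE \<nu> k0) (EE \<xi> k1)"
    proof (cases "i = k0 \<and> k0 < k1 \<and> le2 ((he ^^ (k1 - i)) (\<nu> i)) (\<xi> k1)")
      case True
      then obtain d' where d: "k1 - i = Suc d'" by (metis Suc_diff_Suc)
      have "(he ^^ d') (he (\<nu> i)) = (he ^^ (k1 - i)) (\<nu> i)"
        unfolding d by (simp add: funpow_Suc_right del: funpow.simps)
      moreover have t: "le2 ((he ^^ (k1 - i)) (\<nu> i)) (\<xi> k1)" using True by blast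
      ultimately have "less2 (he (\<nu> i)) (LamT d' (succ2 (\<xi> k1)))"
        using H_lemma[OF K, of d' "he (\<nu> i)" "\<xi> k1"] by simp
      then have "less2 (succ2 (\<nu> i)) (LamT (k1 - i) (succ2 (\<xi> k1)))"
        unfolding d LamT_Suc by (rule S_lemma)
      then have "less2 (LamT (i - 2) (succ2 (\<nu> i))) (LamT (i - 2) (LamT (k1 - i) (succ2 (\<xi> k1))))"
        by (rule LamT_mono)
      moreover have "i - 2 + (k1 - i) = k1 - 2" using i k1 by simp
      ultimately show ?thesis using True unfolding EE_def LamT_add by simp
    next
      case False
      then have c: "k1 \<le> k0" "k1 = i" "less2 (\<nu> k0) ((he ^^ (k0 - i)) (\<xi> i))" using lx nz by blast+
      have "wf2 (\<xi> i)" "wf2 (\<nu> k0)" using assms(3,4) i k0 by auto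
      then have "le2 (LamT (k0 - i) (succ2 (\<nu> k0))) (\<xi> i)"
        using G_lemma[OF K] c k0 by blast
      then have "less2 (LamT (k0 - i) (succ2 (\<nu> k0))) (succ2 (\<xi> i))"
        using le_less2_trans L2A[OF K] by blast
      then have "less2 (LamT (i - 2) (LamT (k0 - i) (succ2 (\<nu> k0)))) (LamT (i - 2) (succ2 (\<xi> i)))"
        by (rule LamT_mono)
      moreover have "i - 2 + (k0 - i) = k0 - 2" using i k0 by simp
      ultimately show ?thesis using c unfolding EE_def LamT_add by simp
    qed
    then show ?thesis using A B by (simp add: less2_def)
  qed
  have "less2 (C (MM \<nu> [2..<i] @ MM \<nu> [i..<N])) (C (MM \<xi> [2..<i] @ MM \<xi> [i..<N]))"
    using main pre unfolding less2_def by (simp add: cnf_less_prefix less1_irrefl)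
  then show ?thesis
    using ord_o_eq[OF K assms(5,3)] ord_o_eq[OF K assms(6,4)] split by (simp add: MM_def)
qed

end
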